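(* Let $0<a<b<1$. There exist $c_1,c_2,c_3,c_4,R_0>0$ such that for every $R\ge R_0$ there exists a family $(F_\alpha)_{\alpha\in A}$ of $C^2$ diffeomorphisms onto their images $F_\alpha:\mathbb{R}\times[-R^a,2R^a]\to\mathbb{R}^2$ with $F_\alpha(0)=0$, satisfying: 1. $|A|\ge\exp(c_1R^{1-b})$; 2. for any distinct $\alpha,\alpha'\in A$, either there is a continuous path contained in $F_\alpha([0,R]\times\{0\})\cap F_{\alpha'}([0,R]\times[0,R^a])$ going from $0$ to $F_{\alpha'}([0,R]\times\{R^a\})$, or the same holds with $\alpha$ and $\alpha'$ interchanged; 3. for every $\alpha\in A$ and $x\in\mathbb{R}\times[-R^a,2R^a]$: (i) $|d^2_xF_\alpha|\le c_2R^{2(a-b)}$; (ii) there is $J^\alpha_x\in O(2)$ with $|d_xF_\alpha-J^\alpha_x|\le c_3R^{2(a-b)}$; (iii) for every $y\in\mathbb{R}\times[-R^a,2R^a]$, $|x-y|/c_4\le|F_\alpha(x)-F_\alpha(y)|\le c_4|x-y|$. *)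

theory Defs
  imports "HOL-Analysis.Analysis"
begin

text \<open>Points of the plane are elements of real^2; coordinate 1 is the first
  (horizontal) coordinate, coordinate 2 the second.\<close>

definition strip :: "real \<Rightarrow> (real^2) set" where
  "strip h = {x. - h \<le> x$2 \<and> x$2 \<le> 2 * h}"

definition C2_with :: "'a::euclidean_space set \<Rightarrow> ('a \<Rightarrow> 'b::euclidean_space)
    \<Rightarrow> ('a \<Rightarrow> 'a \<Rightarrow>\<^sub>L 'b) \<Rightarrow> ('a \<Rightarrow> 'a \<Rightarrow>\<^sub>L 'a \<Rightarrow>\<^sub>L 'b) \<Rightarrow> bool" where
  "C2_with S f Df D2f \<longleftrightarrow>
     (\<forall>x\<in>S. (f has_derivative blinfun_apply (Df x)) (at x within S) \<and>
             (Df has_derivative blinfun_apply (D2f x)) (at x within S)) \<and>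
     continuous_on S D2f"

definition C2_on :: "'a::euclidean_space set \<Rightarrow> ('a \<Rightarrow> 'b::euclidean_space) \<Rightarrow> bool" where
  "C2_on S f \<longleftrightarrow> (\<exists>Df D2f. C2_with S f Df D2f)"

definition C2_diffeo_onto_image :: "'a::euclidean_space set \<Rightarrow> ('a \<Rightarrow> 'b::euclidean_space) \<Rightarrow> bool" where
  "C2_diffeo_onto_image S f \<longleftrightarrow> inj_on f S \<and> C2_on S f \<and> C2_on (f ` S) (inv_into S f)"

definition path_in_from_to :: "(real^2) set \<Rightarrow> real^2 \<Rightarrow> (real^2) set \<Rightarrow> bool" where
  "path_in_from_to K p T \<longleftrightarrow>
     (\<exists>g. path g \<and> path_image g \<subseteq> K \<and> pathstart g = p \<and> pathfinish g \<in> T)"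

end

theory Submission
  imports Defs
begin

definition mat2 :: "real \<Rightarrow> real \<Rightarrow> real \<Rightarrow> real \<Rightarrow> (real^2) \<Rightarrow>\<^sub>L (real^2)" where
  "mat2 a b c d = Blinfun (\<lambda>v. vector [a * v$1 + b * v$2, c * v$1 + d * v$2])"

lemma bl_mat2: "bounded_linear (\<lambda>v::real^2. vector [a * v$1 + b * v$2, c * v$1 + d * v$2] :: real^2)"
proof -
  have "linear (\<lambda>v::real^2. vector [a * v$1 + b * v$2, c * v$1 + d * v$2] :: real^2)"
    by (rule linearI) (auto simp: vec_eq_iff forall_2 algebra_simps)
  then show ?thesis by (simp add: linear_conv_bounded_linear)
qed

lemma mat2_apply: "blinfun_apply (mat2 a b c d) v = vector [a * v$1 + b * v$2, c * v$1 + d * v$2]"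
  unfolding mat2_def by (simp add: bounded_linear_Blinfun_apply[OF bl_mat2])

lemma mat2_apply1[simp]: "blinfun_apply (mat2 a b c d) v $ 1 = a * v$1 + b * v$2"
  and mat2_apply2[simp]: "blinfun_apply (mat2 a b c d) v $ 2 = c * v$1 + d * v$2"
  by (simp_all add: mat2_apply)

lemma mat2_decomp: "mat2 a b c d = a *\<^sub>R mat2 1 0 0 0 + b *\<^sub>R mat2 0 1 0 0 + c *\<^sub>R mat2 0 0 1 0 + d *\<^sub>R mat2 0 0 0 1"
  by (rule blinfun_eqI) (simp add: vec_eq_iff forall_2 plus_blinfun.rep_eq scaleR_blinfun.rep_eq)

lemma mat2_eqI: "(\<And>v. blinfun_apply M v $ 1 = a * v$1 + b * v$2) \<Longrightarrow> (\<And>v. blinfun_apply M v $ 2 = c * v$1 + d * v$2) \<Longrightarrow> M = mat2 a b c d"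
  by (rule blinfun_eqI) (simp add: vec_eq_iff forall_2)

lemma norm_vec2: "norm (v::real^2) \<le> \<bar>v$1\<bar> + \<bar>v$2\<bar>"
  using norm_le_l1_cart[of v] by (simp add: UNIV_2)

lemma norm_mat2: "norm (mat2 a b c d) \<le> \<bar>a\<bar> + \<bar>b\<bar> + \<bar>c\<bar> + \<bar>d\<bar>"
proof (rule norm_blinfun_bound)
  show "0 \<le> \<bar>a\<bar> + \<bar>b\<bar> + \<bar>c\<bar> + \<bar>d\<bar>" by simp
  fix v :: "real^2"
  have n1: "\<bar>v$1\<bar> \<le> norm v" "\<bar>v$2\<bar> \<le> norm v" by (rule component_le_norm_cart)+
  have "norm (blinfun_apply (mat2 a b c d) v) \<le> \<bar>a * v$1 + b * v$2\<bar> + \<bar>c * v$1 + d * v$2\<bar>"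
    using norm_vec2[of "blinfun_apply (mat2 a b c d) v"] by simp
  also have "\<dots> \<le> (\<bar>a\<bar> * \<bar>v$1\<bar> + \<bar>b\<bar> * \<bar>v$2\<bar>) + (\<bar>c\<bar> * \<bar>v$1\<bar> + \<bar>d\<bar> * \<bar>v$2\<bar>)"
    by (intro add_mono) (auto intro: order_trans[OF abs_triangle_ineq] simp: abs_mult)
  also have "\<dots> \<le> (\<bar>a\<bar> * norm v + \<bar>b\<bar> * norm v) + (\<bar>c\<bar> * norm v + \<bar>d\<bar> * norm v)"
    by (intro add_mono mult_left_mono n1) auto
  also have "\<dots> = (\<bar>a\<bar> + \<bar>b\<bar> + \<bar>c\<bar> + \<bar>d\<bar>) * norm v"
    by (simp add: algebra_simps)
  finally show "norm (blinfun_apply (mat2 a b c d) v) \<le> (\<bar>a\<bar> + \<bar>b\<bar> + \<bar>c\<bar> + \<bar>d\<bar>) * norm v" .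
qed

definition mat2d :: "real^2 \<Rightarrow> real^2 \<Rightarrow> real^2 \<Rightarrow> real^2 \<Rightarrow> (real^2) \<Rightarrow>\<^sub>L ((real^2) \<Rightarrow>\<^sub>L (real^2))" where
  "mat2d u1 u2 u3 u4 = Blinfun (\<lambda>k. (u1 \<bullet> k) *\<^sub>R mat2 1 0 0 0 + (u2 \<bullet> k) *\<^sub>R mat2 0 1 0 0 + (u3 \<bullet> k) *\<^sub>R mat2 0 0 1 0 + (u4 \<bullet> k) *\<^sub>R mat2 0 0 0 1)"

lemma bl_mat2d: "bounded_linear (\<lambda>k. (u1 \<bullet> k) *\<^sub>R mat2 1 0 0 0 + (u2 \<bullet> k) *\<^sub>R mat2 0 1 0 0 + (u3 \<bullet> k) *\<^sub>R mat2 0 0 1 0 + (u4 \<bullet> k) *\<^sub>R mat2 0 0 0 1)"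
  by (intro bounded_linear_add bounded_linear_compose[OF bounded_linear_scaleR_left] bounded_linear_inner_right)

lemma mat2d_apply: "blinfun_apply (mat2d u1 u2 u3 u4) k = mat2 (u1 \<bullet> k) (u2 \<bullet> k) (u3 \<bullet> k) (u4 \<bullet> k)"
  unfolding mat2d_def bounded_linear_Blinfun_apply[OF bl_mat2d]
  by (subst (5) mat2_decomp) simp

lemma norm_mat2d: "norm (mat2d u1 u2 u3 u4) \<le> norm u1 + norm u2 + norm u3 + norm u4"
proof (rule norm_blinfun_bound)
  show "0 \<le> norm u1 + norm u2 + norm u3 + norm u4" by simp
  fix k :: "real^2"
  have "norm (blinfun_apply (mat2d u1 u2 u3 u4) k) \<le> \<bar>u1 \<bullet> k\<bar> + \<bar>u2 \<bullet> k\<bar> + \<bar>u3 \<bullet> k\<bar> + \<bar>u4 \<bullet> k\<bar>"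
    unfolding mat2d_apply by (rule norm_mat2)
  also have "\<dots> \<le> norm u1 * norm k + norm u2 * norm k + norm u3 * norm k + norm u4 * norm k"
    by (intro add_mono Cauchy_Schwarz_ineq2)
  finally show "norm (blinfun_apply (mat2d u1 u2 u3 u4) k) \<le> (norm u1 + norm u2 + norm u3 + norm u4) * norm k"
    by (simp add: algebra_simps)
qed

lemma mat2_has_derivative:
  assumes "(f1 has_derivative (\<lambda>k. u1 \<bullet> k)) F" "(f2 has_derivative (\<lambda>k. u2 \<bullet> k)) F"
          "(f3 has_derivative (\<lambda>k. u3 \<bullet> k)) F" "(f4 has_derivative (\<lambda>k. u4 \<bullet> k)) F"
  shows "((\<lambda>x. mat2 (f1 x) (f2 x) (f3 x) (f4 x)) has_derivative blinfun_apply (mat2d u1 u2 u3 u4)) F"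
proof -
  have "((\<lambda>x. f1 x *\<^sub>R mat2 1 0 0 0 + f2 x *\<^sub>R mat2 0 1 0 0 + f3 x *\<^sub>R mat2 0 0 1 0 + f4 x *\<^sub>R mat2 0 0 0 1)
     has_derivative (\<lambda>k. (u1 \<bullet> k) *\<^sub>R mat2 1 0 0 0 + (u2 \<bullet> k) *\<^sub>R mat2 0 1 0 0 + (u3 \<bullet> k) *\<^sub>R mat2 0 0 1 0 + (u4 \<bullet> k) *\<^sub>R mat2 0 0 0 1)) F"
    by (intro has_derivative_add has_derivative_scaleR_left assms)
  then show ?thesis
    unfolding mat2d_def bounded_linear_Blinfun_apply[OF bl_mat2d]
    by (subst mat2_decomp) simp
qed

lemma mat2_cont:
  assumes "continuous_on S f1" "continuous_on S f2" "continuous_on S f3" "continuous_on S f4"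
  shows "continuous_on S (\<lambda>x. mat2 (f1 x) (f2 x) (f3 x) (f4 x))"
  by (subst mat2_decomp) (intro continuous_on_add continuous_on_scaleR continuous_on_const assms)

lemma inner_vec2: "(vector [a, b] :: real^2) \<bullet> k = a * k$1 + b * k$2"
  by (simp add: inner_vec_def UNIV_2)

lemma hd_nth[derivative_intros]: "((\<lambda>x::real^2. x$i) has_derivative (\<lambda>k. k$i)) F"
  by (rule bounded_linear_imp_has_derivative) (rule bounded_linear_vec_nth)

lemma hd_comp_real[derivative_intros]:
  assumes "(g has_real_derivative d) (at (f x))" "(f has_derivative f') (at x within S)"
  shows "((\<lambda>x. g (f x)) has_derivative (\<lambda>k. d * f' k)) (at x within S)"
  using has_derivative_compose[OF assms(2) assms(1)[unfolded has_field_derivative_def]] by simp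

lemma vec2_has_derivative:
  assumes "(f1 has_derivative f1') F" "(f2 has_derivative f2') F"
  shows "((\<lambda>x. vector [f1 x, f2 x] :: real^2) has_derivative (\<lambda>k. vector [f1' k, f2' k])) F"
proof -
  have e: "\<And>a b. (vector [a, b] :: real^2) = a *\<^sub>R vector [1,0] + b *\<^sub>R vector [0,1]"
    by (simp add: vec_eq_iff forall_2)
  show ?thesis
    by (subst e, subst (2) e) (intro has_derivative_add has_derivative_scaleR_left assms)
qed

lemma lipschitz_real:
  assumes "\<And>t. (f has_real_derivative f' t) (at t)" "\<And>t. \<bar>f' t\<bar> \<le> B"
  shows "\<bar>f x - f y\<bar> \<le> B * \<bar>x - y\<bar>"
  using field_differentiable_bound[of UNIV f f' B x y] assms
  by (auto simp: has_field_derivative_at_within)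

locale smap =
  fixes g g1 g2 g3 :: "real \<Rightarrow> real" and h \<sigma> \<kappa> \<tau> :: real
  assumes d0: "\<And>t. (g has_real_derivative g1 t) (at t)"
      and d1: "\<And>t. (g1 has_real_derivative g2 t) (at t)"
      and d2: "\<And>t. (g2 has_real_derivative g3 t) (at t)"
      and cont3: "continuous_on UNIV g3"
      and hpos: "h > 0"
      and b1: "\<And>t. \<bar>g1 t\<bar> \<le> \<sigma>" and b2: "\<And>t. \<bar>g2 t\<bar> \<le> \<kappa>" and b3: "\<And>t. \<bar>g3 t\<bar> \<le> \<tau>"
      and small: "3*h*\<kappa> + 2*\<sigma> \<le> 1/2"
begin

definition F :: "real^2 \<Rightarrow> real^2" where
  "F p = vector [p$1 - p$2 * g1 (p$1), p$2 + g (p$1)]"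

definition DF :: "real^2 \<Rightarrow> ((real^2) \<Rightarrow>\<^sub>L (real^2))" where
  "DF p = mat2 (1 - p$2 * g2 (p$1)) (- g1 (p$1)) (g1 (p$1)) 1"

definition D2F :: "real^2 \<Rightarrow> ((real^2) \<Rightarrow>\<^sub>L ((real^2) \<Rightarrow>\<^sub>L (real^2)))" where
  "D2F p = mat2d (vector [- (p$2 * g3 (p$1)), - g2 (p$1)]) (vector [- g2 (p$1), 0]) (vector [g2 (p$1), 0]) (vector [0, 0])"

definition U :: "(real^2) set" where "U = {p. -2*h < p$2 \<and> p$2 < 3*h}"

definition det :: "real^2 \<Rightarrow> real" where "det p = 1 - p$2 * g2 (p$1) + (g1 (p$1))\<^sup>2"

definition N :: "real^2 \<Rightarrow> ((real^2) \<Rightarrow>\<^sub>L (real^2))" where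
  "N p = mat2 (1 / det p) (g1 (p$1) / det p) (- g1 (p$1) / det p) ((1 - p$2 * g2 (p$1)) / det p)"

lemma kpos: "0 \<le> \<kappa>" using b2[of 0] by simp
lemma spos: "0 \<le> \<sigma>" using b1[of 0] by simp
lemma tpos: "0 \<le> \<tau>" using b3[of 0] by simp
lemma hk: "0 \<le> h * \<kappa>" using hpos kpos by simp
lemma sle: "\<sigma> \<le> 1/4" using small hk by linarith

lemma F_deriv: "(F has_derivative blinfun_apply (DF p)) (at p within S)"
proof -
  have c1: "((\<lambda>p::real^2. p$1 - p$2 * g1 (p$1)) has_derivative (\<lambda>k. k$1 - (k$2 * g1 (p$1) + p$2 * (g2 (p$1) * k$1)))) (at p within S)"
    by (rule has_derivative_eq_rhs[OF has_derivative_diff[OF hd_nth has_derivative_mult[OF hd_nth hd_comp_real[OF d1 hd_nth]]]]) (simp add: algebra_simps)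
  have c2: "((\<lambda>p::real^2. p$2 + g (p$1)) has_derivative (\<lambda>k. k$2 + g1 (p$1) * k$1)) (at p within S)"
    by (rule has_derivative_add[OF hd_nth hd_comp_real[OF d0 hd_nth]])
  have "(F has_derivative (\<lambda>k. vector [k$1 - (k$2 * g1 (p$1) + p$2 * (g2 (p$1) * k$1)), k$2 + g1 (p$1) * k$1])) (at p within S)"
    unfolding F_def[abs_def] by (rule vec2_has_derivative[OF c1 c2])
  moreover have "(\<lambda>k. vector [k$1 - (k$2 * g1 (p$1) + p$2 * (g2 (p$1) * k$1)), k$2 + g1 (p$1) * k$1]) = blinfun_apply (DF p)"
    by (rule ext) (simp add: DF_def mat2_apply algebra_simps)
  ultimately show ?thesis by simp
qed

lemma DF_deriv: "(DF has_derivative blinfun_apply (D2F p)) (at p within S)"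
  unfolding DF_def[abs_def] D2F_def
proof (rule mat2_has_derivative)
  show "((\<lambda>x::real^2. 1 - x $ 2 * g2 (x $ 1)) has_derivative (\<bullet>) (vector [- (p $ 2 * g3 (p $ 1)), - g2 (p $ 1)])) (at p within S)"
    by (rule has_derivative_eq_rhs[OF has_derivative_diff[OF has_derivative_const has_derivative_mult[OF hd_nth hd_comp_real[OF d2 hd_nth]]]])
      (simp add: inner_vec2 fun_eq_iff algebra_simps)
  show "((\<lambda>x::real^2. - g1 (x $ 1)) has_derivative (\<bullet>) (vector [- g2 (p $ 1), 0])) (at p within S)"
    by (rule has_derivative_eq_rhs[OF has_derivative_minus[OF hd_comp_real[OF d1 hd_nth]]])
      (simp add: inner_vec2 fun_eq_iff algebra_simps)
  show "((\<lambda>x::real^2. g1 (x $ 1)) has_derivative (\<bullet>) (vector [g2 (p $ 1), 0])) (at p within S)"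
    by (rule has_derivative_eq_rhs[OF hd_comp_real[OF d1 hd_nth]])
      (simp add: inner_vec2 fun_eq_iff algebra_simps)
  show "((\<lambda>x::real^2. 1) has_derivative (\<bullet>) (vector [0, 0])) (at p within S)"
    by (rule has_derivative_eq_rhs[OF has_derivative_const])
      (simp add: inner_vec2 fun_eq_iff algebra_simps)
qed

lemma cont_g: "continuous_on S (\<lambda>p::real^2. g (p$1))" "continuous_on S (\<lambda>p::real^2. g1 (p$1))"
    "continuous_on S (\<lambda>p::real^2. g2 (p$1))" "continuous_on S (\<lambda>p::real^2. g3 (p$1))"
proof -
  have c: "continuous_on UNIV g" "continuous_on UNIV g1" "continuous_on UNIV g2"
    using d0 d1 d2 by (auto intro!: continuous_at_imp_continuous_on DERIV_isCont)
  have cx: "continuous_on S (\<lambda>p::real^2. p$1)" by (rule linear_continuous_on[OF bounded_linear_vec_nth])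
  show "continuous_on S (\<lambda>p::real^2. g (p$1))" "continuous_on S (\<lambda>p::real^2. g1 (p$1))"
    "continuous_on S (\<lambda>p::real^2. g2 (p$1))" "continuous_on S (\<lambda>p::real^2. g3 (p$1))"
    using continuous_on_compose2[OF c(1) cx subset_UNIV] continuous_on_compose2[OF c(2) cx subset_UNIV]
      continuous_on_compose2[OF c(3) cx subset_UNIV] continuous_on_compose2[OF cont3 cx subset_UNIV] by auto
qed

lemma D2F_cont: "continuous_on S D2F"
proof (rule continuous_on_blinfun_componentwise)
  fix i :: "real^2"
  show "continuous_on S (\<lambda>x. blinfun_apply (D2F x) i)"
    unfolding D2F_def mat2d_apply inner_vec2
    by (intro mat2_cont continuous_on_add continuous_on_mult continuous_on_minus continuous_on_const cont_g)
       (rule linear_continuous_on[OF bounded_linear_vec_nth])+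
qed

end

context smap begin

lemma key_est:
  assumes "\<bar>p$2\<bar> \<le> 3*h" "\<bar>q$2\<bar> \<le> 3*h"
  shows "norm (F p - F q - (p - q)) \<le> 1/2 * norm (p - q)"
proof -
  have L1: "\<bar>g1 (p$1) - g1 (q$1)\<bar> \<le> \<kappa> * \<bar>p$1 - q$1\<bar>" by (rule lipschitz_real[OF d1 b2])
  have L0: "\<bar>g (p$1) - g (q$1)\<bar> \<le> \<sigma> * \<bar>p$1 - q$1\<bar>" by (rule lipschitz_real[OF d0 b1])
  have e1: "(F p - F q - (p - q))$1 = - (p$2 * (g1 (p$1) - g1 (q$1)) + (p$2 - q$2) * g1 (q$1))"
    by (simp add: F_def algebra_simps)
  have e2: "(F p - F q - (p - q))$2 = g (p$1) - g (q$1)"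
    by (simp add: F_def algebra_simps)
  have "\<bar>p$2 * (g1 (p$1) - g1 (q$1))\<bar> \<le> (3*h) * (\<kappa> * \<bar>p$1 - q$1\<bar>)"
    unfolding abs_mult using hpos by (intro mult_mono assms L1) auto
  moreover have "\<bar>(p$2 - q$2) * g1 (q$1)\<bar> \<le> \<bar>p$2 - q$2\<bar> * \<sigma>"
    unfolding abs_mult by (intro mult_left_mono b1) auto
  ultimately have E1: "\<bar>(F p - F q - (p - q))$1\<bar> \<le> 3*h*\<kappa> * \<bar>p$1 - q$1\<bar> + \<sigma> * \<bar>p$2 - q$2\<bar>"
    unfolding e1 by (smt (verit) mult.commute mult.assoc)
  have n1: "\<bar>p$1 - q$1\<bar> \<le> norm (p - q)" "\<bar>p$2 - q$2\<bar> \<le> norm (p - q)"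
    using component_le_norm_cart[of "p - q"] by auto
  have "norm (F p - F q - (p - q)) \<le> \<bar>(F p - F q - (p - q))$1\<bar> + \<bar>(F p - F q - (p - q))$2\<bar>"
    by (rule norm_vec2)
  also have "\<dots> \<le> (3*h*\<kappa> + \<sigma>) * \<bar>p$1 - q$1\<bar> + \<sigma> * \<bar>p$2 - q$2\<bar>"
    by (rule order_trans[OF add_mono[OF E1 L0[folded e2]]]) (simp add: algebra_simps)
  also have "\<dots> \<le> (3*h*\<kappa> + \<sigma>) * norm (p - q) + \<sigma> * norm (p - q)"
    using hk spos by (intro add_mono mult_left_mono n1) auto
  also have "\<dots> = (3*h*\<kappa> + 2*\<sigma>) * norm (p - q)" by (simp add: algebra_simps)
  also have "\<dots> \<le> 1/2 * norm (p - q)" using small by (intro mult_right_mono) auto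
  finally show ?thesis .
qed

lemma bilip:
  assumes "\<bar>p$2\<bar> \<le> 3*h" "\<bar>q$2\<bar> \<le> 3*h"
  shows "norm (p - q) / 2 \<le> norm (F p - F q)" "norm (F p - F q) \<le> 2 * norm (p - q)"
proof -
  have k: "norm (F p - F q - (p - q)) \<le> 1/2 * norm (p - q)" by (rule key_est[OF assms])
  have "norm (p - q) \<le> norm (F p - F q) + norm (F p - F q - (p - q))"
    using norm_triangle_ineq4[of "F p - F q" "F p - F q - (p - q)"] by simp
  then show "norm (p - q) / 2 \<le> norm (F p - F q)" using k by simp
  have "norm (F p - F q) \<le> norm (p - q) + norm (F p - F q - (p - q))"
    using norm_triangle_ineq[of "p - q" "F p - F q - (p - q)"] by simp
  then show "norm (F p - F q) \<le> 2 * norm (p - q)" using k norm_ge_zero[of "p - q"] by linarith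
qed

lemma U_bound: "p \<in> U \<Longrightarrow> \<bar>p$2\<bar> \<le> 3*h"
  using hpos by (auto simp: U_def)

lemma strip_U: "strip h \<subseteq> U"
  using hpos by (auto simp: strip_def U_def)

lemma strip_bound: "p \<in> strip h \<Longrightarrow> \<bar>p$2\<bar> \<le> 2*h"
  using hpos by (auto simp: strip_def)

lemma inj_U: "inj_on F U"
proof (rule inj_onI)
  fix p q assume "p \<in> U" "q \<in> U" "F p = F q"
  then show "p = q" using bilip(1)[OF U_bound U_bound, of p q] by simp
qed

lemma F_cont: "continuous_on S F"
  by (rule has_derivative_continuous_on) (rule F_deriv)

lemma open_U: "open U"
proof -
  have "U = {p. -2*h < p$2} \<inter> {p::real^2. p$2 < 3*h}" by (auto simp: U_def)
  moreover have "open {p::real^2. -2*h < p$2}" "open {p::real^2. p$2 < 3*h}"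
    by (intro open_Collect_less continuous_on_const linear_continuous_on bounded_linear_vec_nth)+
  ultimately show ?thesis by auto
qed

lemma open_FU: "open (F ` U)"
  by (rule invariance_of_domain[OF F_cont open_U inj_U])

definition G where "G = inv_into U F"

lemma G_F: "p \<in> U \<Longrightarrow> G (F p) = p"
  unfolding G_def by (rule inv_into_f_f[OF inj_U])

lemma G_in: "y \<in> F ` U \<Longrightarrow> G y \<in> U" and F_G: "y \<in> F ` U \<Longrightarrow> F (G y) = y"
  unfolding G_def by (auto intro: inv_into_into f_inv_into_f)

lemma G_lip: "y \<in> F ` U \<Longrightarrow> z \<in> F ` U \<Longrightarrow> norm (G y - G z) \<le> 2 * norm (y - z)"
  using bilip(1)[OF U_bound[OF G_in] U_bound[OF G_in], of y z] F_G[of y] F_G[of z] by simp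

lemma G_cont: "continuous_on (F ` U) G"
  unfolding continuous_on_iff
proof (intro ballI allI impI)
  fix x e assume x: "x \<in> F ` U" and e: "(0::real) < e"
  show "\<exists>d>0. \<forall>x'\<in>F ` U. dist x' x < d \<longrightarrow> dist (G x') (G x) < e"
  proof (intro exI[of _ "e/2"] conjI ballI impI)
    fix x' assume "x' \<in> F ` U" "dist x' x < e/2"
    then show "dist (G x') (G x) < e" using G_lip[of x' x] x by (simp add: dist_norm)
  qed (use e in auto)
qed

lemma det_pos: "p \<in> U \<Longrightarrow> 1/2 \<le> det p"
proof -
  assume "p \<in> U"
  then have a: "\<bar>p$2\<bar> \<le> 3*h" by (rule U_bound)
  have "\<bar>p$2 * g2 (p$1)\<bar> \<le> 3*h*\<kappa>"
    unfolding abs_mult using hpos by (intro mult_mono a b2) auto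
  moreover have "0 \<le> (g1 (p$1))\<^sup>2" by simp
  ultimately show ?thesis using small spos unfolding det_def by linarith
qed

lemma N_DF: "p \<in> U \<Longrightarrow> N p o\<^sub>L DF p = id_blinfun" and DF_N: "p \<in> U \<Longrightarrow> DF p o\<^sub>L N p = id_blinfun"
proof -
  assume "p \<in> U"
  then have d: "1 - p$2 * g2 (p$1) + (g1 (p$1))\<^sup>2 \<noteq> 0" using det_pos[of p] unfolding det_def by auto
  show "N p o\<^sub>L DF p = id_blinfun"
    by (rule blinfun_eqI) (use d in \<open>simp add: N_def DF_def vec_eq_iff forall_2 det_def divide_simps, simp add: algebra_simps power2_eq_square\<close>)
  show "DF p o\<^sub>L N p = id_blinfun"
    by (rule blinfun_eqI) (use d in \<open>simp add: N_def DF_def vec_eq_iff forall_2 det_def divide_simps, simp add: algebra_simps power2_eq_square\<close>)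
qed

end

context smap begin

lemma gdiff: "(\<lambda>p::real^2. g (p$1)) differentiable (at p)" "(\<lambda>p::real^2. g1 (p$1)) differentiable (at p)"
   "(\<lambda>p::real^2. g2 (p$1)) differentiable (at p)" "(\<lambda>p::real^2. p$2) differentiable (at p)"
  unfolding differentiable_def
  using hd_comp_real[OF d0 hd_nth] hd_comp_real[OF d1 hd_nth] hd_comp_real[OF d2 hd_nth] hd_nth by blast+

lemma N_differentiable: "p \<in> U \<Longrightarrow> N differentiable (at p)"
proof -
  assume p: "p \<in> U"
  have dd: "(\<lambda>p. det p) differentiable (at p)"
    unfolding det_def[abs_def]
    by (intro differentiable_add differentiable_diff differentiable_mult differentiable_power differentiable_const gdiff)
  have dn: "det p \<noteq> 0" using det_pos[OF p] by auto
  show ?thesis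
    unfolding N_def[abs_def]
    apply (subst mat2_decomp)
    apply (intro differentiable_add differentiable_scaleR differentiable_const)
    by (intro differentiable_divide differentiable_minus differentiable_diff differentiable_mult
         differentiable_const gdiff dd dn)+
qed

lemma N_deriv_formula:
  assumes p: "p \<in> U" and der: "(N has_derivative N') (at p)"
  shows "N' k = - ((N p o\<^sub>L D2F p k) o\<^sub>L N p)"
proof -
  have H: "((\<lambda>x. N x o\<^sub>L DF x) has_derivative (\<lambda>k. (N p o\<^sub>L blinfun_apply (D2F p) k) + (N' k o\<^sub>L DF p))) (at p)"
    using bounded_bilinear.FDERIV[OF bounded_bilinear_blinfun_compose der DF_deriv[of p UNIV]] by simp
  have H0: "((\<lambda>x. N x o\<^sub>L DF x) has_derivative (\<lambda>k. 0)) (at p)"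
    by (rule has_derivative_transform_within_open[OF has_derivative_const open_U p])
       (simp add: N_DF)
  have "(\<lambda>k. (N p o\<^sub>L blinfun_apply (D2F p) k) + (N' k o\<^sub>L DF p)) = (\<lambda>k. 0)"
    by (rule has_derivative_unique[OF H H0])
  then have "(N p o\<^sub>L blinfun_apply (D2F p) k) + (N' k o\<^sub>L DF p) = 0" by (rule fun_cong)
  then have e: "N' k o\<^sub>L DF p = - (N p o\<^sub>L blinfun_apply (D2F p) k)"
    by (simp add: add_eq_0_iff)
  have dn: "\<And>v. blinfun_apply (DF p) (blinfun_apply (N p) v) = v"
    using DF_N[OF p] by (metis blinfun_apply_blinfun_compose blinfun_apply_id_blinfun)
  have "N' k = (N' k o\<^sub>L DF p) o\<^sub>L N p"
    by (rule blinfun_eqI) (simp add: dn)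
  then show ?thesis by (simp add: e bounded_bilinear.minus_left[OF bounded_bilinear_blinfun_compose])
qed

lemma G_deriv: "y \<in> F ` U \<Longrightarrow> (G has_derivative blinfun_apply (N (G y))) (at y)"
proof -
  assume y: "y \<in> F ` U"
  show ?thesis
  proof (rule has_derivative_inverse_basic[where f = F and T = "F ` U"])
    show "(F has_derivative blinfun_apply (DF (G y))) (at (G y))" using F_deriv[of "G y" UNIV] by simp
    show "bounded_linear (blinfun_apply (N (G y)))" by (rule blinfun.bounded_linear_right)
    show "blinfun_apply (N (G y)) \<circ> blinfun_apply (DF (G y)) = id"
    proof -
      have "blinfun_apply (N (G y) o\<^sub>L DF (G y)) v = v" for v using N_DF[OF G_in[OF y]] by simp
      then show ?thesis by (simp add: fun_eq_iff)
    qed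
    show "continuous (at y) G"
      using continuous_on_eq_continuous_at[OF open_FU, of G] G_cont y by blast
  qed (use y open_FU F_G in auto)
qed

definition DG where "DG y = N (G y)"

lemma bl_Q: "bounded_linear (\<lambda>k. - ((A o\<^sub>L blinfun_apply B (blinfun_apply A k)) o\<^sub>L A))"
proof -
  have "bounded_linear (\<lambda>k. (A o\<^sub>L blinfun_apply B (blinfun_apply A k)) o\<^sub>L A)"
    by (intro bounded_linear_compose[OF bounded_bilinear.bounded_linear_left[OF bounded_bilinear_blinfun_compose]]
        bounded_linear_compose[OF bounded_bilinear.bounded_linear_right[OF bounded_bilinear_blinfun_compose]]
        bounded_linear_compose[OF blinfun.bounded_linear_right] blinfun.bounded_linear_right)
  then show ?thesis by (rule bounded_linear_minus)
qed

definition D2G where "D2G y = Blinfun (\<lambda>k. - ((N (G y) o\<^sub>L blinfun_apply (D2F (G y)) (blinfun_apply (N (G y)) k)) o\<^sub>L N (G y)))"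

lemma D2G_apply: "blinfun_apply (D2G y) k = - ((N (G y) o\<^sub>L blinfun_apply (D2F (G y)) (blinfun_apply (N (G y)) k)) o\<^sub>L N (G y))"
  unfolding D2G_def by (simp add: bounded_linear_Blinfun_apply[OF bl_Q])

lemma DG_deriv: "y \<in> F ` U \<Longrightarrow> (DG has_derivative blinfun_apply (D2G y)) (at y)"
proof -
  assume y: "y \<in> F ` U"
  obtain N' where N': "(N has_derivative N') (at (G y))"
    using N_differentiable[OF G_in[OF y]] unfolding differentiable_def by blast
  have "((\<lambda>y. N (G y)) has_derivative (\<lambda>k. N' (blinfun_apply (N (G y)) k))) (at y)"
    using has_derivative_compose[OF G_deriv[OF y] N'] by simp
  moreover have "(\<lambda>k. N' (blinfun_apply (N (G y)) k)) = blinfun_apply (D2G y)"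
    by (rule ext) (simp add: D2G_apply N_deriv_formula[OF G_in[OF y] N'])
  ultimately show ?thesis unfolding DG_def[abs_def] by simp
qed

lemma N_cont: "continuous_on U N"
proof -
  have dn: "\<forall>p\<in>U. det p \<noteq> 0" using det_pos by fastforce
  have dc: "continuous_on U det"
    unfolding det_def[abs_def]
    by (intro continuous_on_add continuous_on_diff continuous_on_mult continuous_on_power continuous_on_const cont_g
        linear_continuous_on bounded_linear_vec_nth)
  show ?thesis
    unfolding N_def[abs_def]
    by (intro mat2_cont continuous_on_divide continuous_on_diff continuous_on_mult continuous_on_minus
        continuous_on_const cont_g dc dn linear_continuous_on bounded_linear_vec_nth)
qed

lemma NG_cont: "continuous_on (F ` U) (\<lambda>y. N (G y))"
  by (rule continuous_on_compose2[OF N_cont G_cont]) (auto intro: G_in)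

lemma D2FG_cont: "continuous_on (F ` U) (\<lambda>y. D2F (G y))"
  by (rule continuous_on_compose2[OF D2F_cont G_cont]) (auto intro: G_in)

lemma D2G_cont: "continuous_on (F ` U) D2G"
proof (rule continuous_on_blinfun_componentwise)
  fix i :: "real^2"
  have c: "continuous_on (F ` U) (\<lambda>y. - ((N (G y) o\<^sub>L blinfun_apply (D2F (G y)) (blinfun_apply (N (G y)) i)) o\<^sub>L N (G y)))"
    by (intro continuous_on_minus bounded_bilinear.continuous_on[OF bounded_bilinear_blinfun_compose]
        bounded_bilinear.continuous_on[OF bounded_bilinear_blinfun_apply] NG_cont D2FG_cont continuous_on_const)
  then show "continuous_on (F ` U) (\<lambda>y. blinfun_apply (D2G y) i)"
    by (simp add: D2G_apply)
qed

theorem C2_main: "C2_diffeo_onto_image (strip h) F" "C2_with (strip h) F DF D2F"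
proof -
  show C2F: "C2_with (strip h) F DF D2F"
    unfolding C2_with_def using F_deriv DF_deriv D2F_cont by blast
  have inj: "inj_on F (strip h)" by (rule inj_on_subset[OF inj_U strip_U])
  have eq: "inv_into (strip h) F z = G z" if zin: "z \<in> F ` strip h" for z
  proof -
    obtain x where x: "x \<in> strip h" "z = F x" using zin by blast
    then show ?thesis using inv_into_f_f[OF inj x(1)] G_F[of x] strip_U by auto
  qed
  have sub: "F ` strip h \<subseteq> F ` U" using strip_U by auto
  have "C2_with (F ` strip h) (inv_into (strip h) F) DG D2G"
    unfolding C2_with_def
  proof (intro conjI ballI)
    fix y assume y: "y \<in> F ` strip h"
    have "(G has_derivative blinfun_apply (DG y)) (at y within F ` strip h)"
      unfolding DG_def using G_deriv[of y] sub y by (auto intro: has_derivative_at_withinI)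
    then show "(inv_into (strip h) F has_derivative blinfun_apply (DG y)) (at y within F ` strip h)"
      by (rule has_derivative_transform_within[OF _ zero_less_one y]) (simp add: eq)
    show "(DG has_derivative blinfun_apply (D2G y)) (at y within F ` strip h)"
      using DG_deriv[of y] sub y by (auto intro: has_derivative_at_withinI)
  next
    show "continuous_on (F ` strip h) D2G" by (rule continuous_on_subset[OF D2G_cont sub])
  qed
  then show "C2_diffeo_onto_image (strip h) F"
    unfolding C2_diffeo_onto_image_def C2_on_def using inj C2F by blast
qed

end

lemma norm_vector2: "norm (vector [a, b] :: real^2) \<le> \<bar>a\<bar> + \<bar>b\<bar>"
  using norm_vec2[of "vector [a, b]"] by simp

lemma inner_real2: "(x::real^2) \<bullet> y = x$1 * y$1 + x$2 * y$2"
  by (simp add: inner_vec_def UNIV_2)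

lemma mat2_diff: "mat2 a b c d - mat2 a' b' c' d' = mat2 (a - a') (b - b') (c - c') (d - d')"
  by (rule blinfun_eqI) (simp add: vec_eq_iff forall_2 minus_blinfun.rep_eq algebra_simps)

definition rot :: "real \<Rightarrow> (real^2) \<Rightarrow>\<^sub>L (real^2)" where
  "rot t = mat2 (1 / sqrt (1 + t\<^sup>2)) (- (t / sqrt (1 + t\<^sup>2))) (t / sqrt (1 + t\<^sup>2)) (1 / sqrt (1 + t\<^sup>2))"

lemma rot_orth: "orthogonal_transformation (blinfun_apply (rot t))"
proof -
  define r where "r = sqrt (1 + t\<^sup>2)"
  have r2: "r\<^sup>2 = 1 + t\<^sup>2" unfolding r_def by simp
  have rpos: "r > 0" unfolding r_def by (simp add: add_pos_nonneg)
  have "linear (blinfun_apply (rot t))" by (rule bounded_linear.linear[OF blinfun.bounded_linear_right])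
  moreover have "blinfun_apply (rot t) v \<bullet> blinfun_apply (rot t) w = v \<bullet> w" for v w
  proof -
    have "blinfun_apply (rot t) v \<bullet> blinfun_apply (rot t) w
        = ((v$1 - t * v$2) * (w$1 - t * w$2) + (t * v$1 + v$2) * (t * w$1 + w$2)) / r\<^sup>2"
      unfolding inner_real2 rot_def r_def[symmetric] using rpos
      by (simp add: field_simps power2_eq_square)
    also have "\<dots> = (v$1 * w$1 + v$2 * w$2) * (1 + t\<^sup>2) / r\<^sup>2"
      by (simp add: algebra_simps power2_eq_square)
    also have "\<dots> = v \<bullet> w"
    proof -
      have "(1 + t\<^sup>2) \<noteq> 0" by (smt (verit) zero_le_power2)
      then show ?thesis using r2 by (simp add: inner_real2)
    qed
    finally show ?thesis .
  qed
  ultimately show ?thesis unfolding orthogonal_transformation_def by blast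
qed

lemma rot_close:
  assumes "\<bar>t\<bar> \<le> 1"
  shows "\<bar>1 - 1 / sqrt (1 + t\<^sup>2)\<bar> \<le> t\<^sup>2" "\<bar>t - t / sqrt (1 + t\<^sup>2)\<bar> \<le> t\<^sup>2"
proof -
  define r where "r = sqrt (1 + t\<^sup>2)"
  have r1: "1 \<le> r" unfolding r_def by simp
  have x1: "1 \<le> 1 + t\<^sup>2" by simp
  have "(1 + t\<^sup>2) * 1 \<le> (1 + t\<^sup>2) * (1 + t\<^sup>2)" using x1 by (intro mult_left_mono) auto
  then have "sqrt (1 + t\<^sup>2) \<le> sqrt ((1 + t\<^sup>2)\<^sup>2)" unfolding power2_eq_square[of "1 + t\<^sup>2"] by (intro real_sqrt_le_mono) simp
  then have "r \<le> 1 + t\<^sup>2" unfolding r_def by simp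
  moreover have "1 * t\<^sup>2 \<le> r * t\<^sup>2" using r1 by (intro mult_right_mono) auto
  ultimately have a: "0 \<le> 1 - 1/r \<and> 1 - 1/r \<le> t\<^sup>2" using r1 by (simp add: field_simps)
  then show "\<bar>1 - 1 / sqrt (1 + t\<^sup>2)\<bar> \<le> t\<^sup>2" unfolding r_def[symmetric] by simp
  have "t - t / r = t * (1 - 1/r)" by (simp add: algebra_simps)
  then have "\<bar>t - t / r\<bar> = \<bar>t\<bar> * (1 - 1/r)" using a by (simp add: abs_mult)
  also have "\<dots> \<le> 1 * t\<^sup>2" using a assms by (intro mult_mono) auto
  finally show "\<bar>t - t / sqrt (1 + t\<^sup>2)\<bar> \<le> t\<^sup>2" unfolding r_def[symmetric] by simp
qed

context smap begin

lemma D2F_bound: "p \<in> strip h \<Longrightarrow> norm (D2F p) \<le> 2*h*\<tau> + 3*\<kappa>"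
proof -
  assume p: "p \<in> strip h"
  have a: "\<bar>p$2 * g3 (p$1)\<bar> \<le> 2*h*\<tau>"
    unfolding abs_mult using strip_bound[OF p] hpos b3 by (intro mult_mono) auto
  have "norm (D2F p) \<le> (\<bar>p$2 * g3 (p$1)\<bar> + \<bar>g2 (p$1)\<bar>) + \<bar>g2 (p$1)\<bar> + \<bar>g2 (p$1)\<bar> + 0"
    unfolding D2F_def
    by (rule order_trans[OF norm_mat2d]) (intro add_mono; (rule order_trans[OF norm_vector2])?; simp)
  also have "\<dots> \<le> 2*h*\<tau> + 3*\<kappa>" using a b2[of "p$1"] by simp
  finally show ?thesis .
qed

lemma DF_close: "p \<in> strip h \<Longrightarrow> norm (DF p - rot (g1 (p$1))) \<le> 2*h*\<kappa> + 4*\<sigma>\<^sup>2"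
proof -
  assume p: "p \<in> strip h"
  define t where "t = g1 (p$1)"
  have t1: "\<bar>t\<bar> \<le> 1" using b1[of "p$1"] sle unfolding t_def by simp
  have ts: "t\<^sup>2 \<le> \<sigma>\<^sup>2" unfolding t_def using b1[of "p$1"] spos by (metis abs_le_square_iff abs_of_nonneg)
  have a: "\<bar>p$2 * g2 (p$1)\<bar> \<le> 2*h*\<kappa>"
    unfolding abs_mult using strip_bound[OF p] hpos b2 by (intro mult_mono) auto
  note rc = rot_close[OF t1]
  have "norm (DF p - rot t) \<le> \<bar>1 - p$2 * g2 (p$1) - 1 / sqrt (1 + t\<^sup>2)\<bar> + \<bar>- t + t / sqrt (1 + t\<^sup>2)\<bar>
       + \<bar>t - t / sqrt (1 + t\<^sup>2)\<bar> + \<bar>1 - 1 / sqrt (1 + t\<^sup>2)\<bar>"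
    unfolding DF_def rot_def mat2_diff t_def[symmetric] by (rule order_trans[OF norm_mat2]) simp
  also have "\<dots> \<le> (2*h*\<kappa> + t\<^sup>2) + t\<^sup>2 + t\<^sup>2 + t\<^sup>2"
  proof -
    have "\<bar>1 - p$2 * g2 (p$1) - 1 / sqrt (1 + t\<^sup>2)\<bar> \<le> \<bar>1 - 1 / sqrt (1 + t\<^sup>2)\<bar> + \<bar>p$2 * g2 (p$1)\<bar>"
      using abs_triangle_ineq4[of "1 - 1 / sqrt (1 + t\<^sup>2)" "p$2 * g2 (p$1)"] by (simp add: algebra_simps)
    moreover have "\<bar>- t + t / sqrt (1 + t\<^sup>2)\<bar> = \<bar>t - t / sqrt (1 + t\<^sup>2)\<bar>" by linarith
    ultimately show ?thesis using a rc by linarith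
  qed
  also have "\<dots> \<le> 2*h*\<kappa> + 4*\<sigma>\<^sup>2" using ts by simp
  finally show ?thesis unfolding t_def .
qed

end

definition clamp :: "real \<Rightarrow> real" where "clamp t = max 0 (min 1 t)"

lemma deriv_split:
  assumes "(f has_field_derivative D) (at_left x)" "(f has_field_derivative D) (at_right x)"
  shows "(f has_field_derivative D) (at (x::real))"
  using assms by (simp add: has_field_derivative_iff filterlim_at_split)

lemma ev_open: "open A \<Longrightarrow> t \<in> A \<Longrightarrow> eventually (\<lambda>s. s \<in> A) (nhds t)"
  by (rule eventually_nhds_in_open)

lemma clamp_deriv:
  fixes Q Q' :: "real \<Rightarrow> real"
  assumes dQ: "\<And>t. (Q has_real_derivative Q' t) (at t)" and z0: "Q' 0 = 0" and z1: "Q' 1 = 0"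
  shows "((\<lambda>t. Q (clamp t)) has_real_derivative Q' (clamp t)) (at t)"
proof -
  have const0: "((\<lambda>t. Q (clamp t)) has_real_derivative 0) (at t)" if "t < 0" for t
  proof -
    have "eventually (\<lambda>s. s \<in> {..<0}) (nhds t)" using that by (intro ev_open) auto
    then have "eventually (\<lambda>s. Q (clamp s) = Q 0) (nhds t)" by eventually_elim (simp add: clamp_def)
    then show ?thesis by (subst DERIV_cong_ev[OF refl _ refl]) (assumption, rule DERIV_const)
  qed
  have const1: "((\<lambda>t. Q (clamp t)) has_real_derivative 0) (at t)" if "t > 1" for t
  proof -
    have "eventually (\<lambda>s. s \<in> {1<..}) (nhds t)" using that by (intro ev_open) auto
    then have "eventually (\<lambda>s. Q (clamp s) = Q 1) (nhds t)" by eventually_elim (simp add: clamp_def)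
    then show ?thesis by (subst DERIV_cong_ev[OF refl _ refl]) (assumption, rule DERIV_const)
  qed
  have mid: "((\<lambda>t. Q (clamp t)) has_real_derivative Q' t) (at t)" if "0 < t" "t < 1" for t
  proof -
    have "eventually (\<lambda>s. s \<in> {0<..<1}) (nhds t)" using that by (intro ev_open) auto
    then have "eventually (\<lambda>s. Q (clamp s) = Q s) (nhds t)" by eventually_elim (simp add: clamp_def)
    then show ?thesis by (subst DERIV_cong_ev[OF refl _ refl]) (assumption, rule dQ)
  qed
  have Qw: "\<And>x S. (Q has_real_derivative Q' x) (at x within S)"
    using dQ by (rule has_field_derivative_at_within)
  have cw: "\<And>c x S. ((\<lambda>_. c) has_real_derivative 0) (at x within S)"
    by (rule has_derivative_imp_has_field_derivative[OF has_derivative_const]) simp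
  consider "t < 0" | "t = 0" | "0 < t \<and> t < 1" | "t = 1" | "t > 1" by linarith
  then show ?thesis
  proof cases
    case 1 then show ?thesis using const0[OF 1] by (simp add: clamp_def z0)
  next
    case 5 then show ?thesis using const1[OF 5] by (simp add: clamp_def z1)
  next
    case 3 then show ?thesis using mid[of t] by (simp add: clamp_def)
  next
    case 2
    have L: "((\<lambda>t. Q (clamp t)) has_real_derivative 0) (at_left 0)"
    proof (subst has_field_derivative_cong_eventually)
      show "eventually (\<lambda>s. Q (clamp s) = Q 0) (at_left 0)"
        unfolding eventually_at_filter by (auto simp: clamp_def)
      show "Q (clamp 0) = Q 0" by (simp add: clamp_def)
    qed (rule cw)
    have R: "((\<lambda>t. Q (clamp t)) has_real_derivative 0) (at_right 0)"
    proof (subst has_field_derivative_cong_eventually)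
      have "eventually (\<lambda>s. s \<in> {..<1}) (nhds (0::real))" by (intro ev_open) auto
      then show "eventually (\<lambda>s. Q (clamp s) = Q s) (at_right 0)"
        unfolding eventually_at_filter by eventually_elim (auto simp: clamp_def)
      show "Q (clamp 0) = Q 0" by (simp add: clamp_def)
    qed (use Qw[of 0] z0 in simp)
    show ?thesis using deriv_split[OF L R] 2 by (simp add: clamp_def z0)
  next
    case 4
    have L: "((\<lambda>t. Q (clamp t)) has_real_derivative 0) (at_left 1)"
    proof (subst has_field_derivative_cong_eventually)
      have "eventually (\<lambda>s. s \<in> {0<..}) (nhds (1::real))" by (intro ev_open) auto
      then show "eventually (\<lambda>s. Q (clamp s) = Q s) (at_left 1)"
        unfolding eventually_at_filter by eventually_elim (auto simp: clamp_def)
      show "Q (clamp 1) = Q 1" by (simp add: clamp_def)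
    qed (use Qw[of 1] z1 in simp)
    have R: "((\<lambda>t. Q (clamp t)) has_real_derivative 0) (at_right 1)"
    proof (subst has_field_derivative_cong_eventually)
      show "eventually (\<lambda>s. Q (clamp s) = Q 1) (at_right 1)"
        unfolding eventually_at_filter by (auto simp: clamp_def)
      show "Q (clamp 1) = Q 1" by (simp add: clamp_def)
    qed (rule cw)
    show ?thesis using deriv_split[OF L R] 4 by (simp add: clamp_def z1)
  qed
qed

definition "P0 u = 35*u^4 - 84*u^5 + 70*u^6 - 20*(u::real)^7"
definition "P1 u = 140*u^3 - 420*u^4 + 420*u^5 - 140*(u::real)^6"
definition "P2 u = 420*u^2 - 1680*u^3 + 2100*u^4 - 840*(u::real)^5"
definition "P3 u = 840*u - 5040*u^2 + 8400*u^3 - 4200*(u::real)^4"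
definition "P4 u = 840 - 10080*u + 25200*u^2 - 16800*(u::real)^3"

lemma dP0: "(P0 has_real_derivative P1 t) (at t)"
  unfolding P0_def[abs_def] P1_def by (rule derivative_eq_intros refl | simp)+
lemma dP1: "(P1 has_real_derivative P2 t) (at t)"
  unfolding P1_def[abs_def] P2_def by (rule derivative_eq_intros refl | simp)+
lemma dP2: "(P2 has_real_derivative P3 t) (at t)"
  unfolding P2_def[abs_def] P3_def by (rule derivative_eq_intros refl | simp)+

lemma P1_zero: "P1 0 = 0" "P1 1 = 0" and P2_zero: "P2 0 = 0" "P2 1 = 0" and P3_zero: "P3 0 = 0" "P3 1 = 0"
  and P0_vals: "P0 0 = 0" "P0 (1/2) = 1/2"
  by (simp_all add: P1_def P2_def P3_def P0_def power_divide)

definition "psi0 t = P0 (clamp t)"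
definition "psi1 t = P1 (clamp t)"
definition "psi2 t = P2 (clamp t)"
definition "psi3 t = P3 (clamp t)"

lemma dpsi0: "(psi0 has_real_derivative psi1 t) (at t)"
  unfolding psi0_def[abs_def] psi1_def by (rule clamp_deriv[OF dP0 P1_zero])
lemma dpsi1: "(psi1 has_real_derivative psi2 t) (at t)"
  unfolding psi1_def[abs_def] psi2_def by (rule clamp_deriv[OF dP1 P2_zero])
lemma dpsi2: "(psi2 has_real_derivative psi3 t) (at t)"
  unfolding psi2_def[abs_def] psi3_def by (rule clamp_deriv[OF dP2 P3_zero])

lemma clamp_cont: "continuous_on S clamp"
  unfolding clamp_def[abs_def] by (intro continuous_intros)

lemma psi3_cont: "continuous_on S psi3"
  unfolding psi3_def[abs_def] P3_def by (intro continuous_intros clamp_cont)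

lemma clamp_range: "0 \<le> clamp t" "clamp t \<le> 1" by (auto simp: clamp_def)

lemma pow01: "0 \<le> (u::real) \<Longrightarrow> u \<le> 1 \<Longrightarrow> 0 \<le> u^n \<and> u^n \<le> 1"
  by (simp add: power_le_one)

lemma psi_bounds: "\<bar>psi1 t\<bar> \<le> 1120" "\<bar>psi2 t\<bar> \<le> 5040" "\<bar>psi3 t\<bar> \<le> 18480"
proof -
  define u where "u = clamp t"
  have u: "0 \<le> u" "u \<le> 1" unfolding u_def by (rule clamp_range)+
  note p = pow01[OF u, of 1] pow01[OF u, of 2] pow01[OF u, of 3] pow01[OF u, of 4] pow01[OF u, of 5] pow01[OF u, of 6]
  show "\<bar>psi1 t\<bar> \<le> 1120" unfolding psi1_def u_def[symmetric] P1_def using p u unfolding abs_le_iff by linarith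
  show "\<bar>psi2 t\<bar> \<le> 5040" unfolding psi2_def u_def[symmetric] P2_def using p u unfolding abs_le_iff by linarith
  show "\<bar>psi3 t\<bar> \<le> 18480" unfolding psi3_def u_def[symmetric] P3_def using p u unfolding abs_le_iff by linarith
qed

lemma psi_vanish: "t \<le> 0 \<or> 1 \<le> t \<Longrightarrow> psi1 t = 0 \<and> psi2 t = 0 \<and> psi3 t = 0"
  by (auto simp: psi1_def psi2_def psi3_def clamp_def P1_zero P2_zero P3_zero)

lemma psi0_neg: "t \<le> 0 \<Longrightarrow> psi0 t = 0"
  by (simp add: psi0_def clamp_def P0_vals)

lemma P0_mono: "0 \<le> a \<Longrightarrow> a \<le> b \<Longrightarrow> b \<le> 1 \<Longrightarrow> P0 a \<le> P0 b"
proof (rule DERIV_nonneg_imp_nondecreasing[of a b P0])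
  fix x assume "0 \<le> a" "a \<le> x" "x \<le> b" "b \<le> 1"
  then have x: "0 \<le> x" "x \<le> 1" by auto
  have "P1 x = 140 * x^3 * (1 - x)^3" by (simp add: P1_def algebra_simps power2_eq_square power3_eq_cube power_def)
  then have "0 \<le> P1 x" using x by simp
  then show "\<exists>y. (P0 has_real_derivative y) (at x) \<and> 0 \<le> y" using dP0 by blast
qed

lemma psi0_half: "psi0 (1/2) = 1/2"
  by (simp add: psi0_def clamp_def P0_vals)

lemma psi0_range: "t \<le> 1/2 \<Longrightarrow> 0 \<le> psi0 t \<and> psi0 t \<le> 1/2"
proof -
  assume t: "t \<le> 1/2"
  have c: "0 \<le> clamp t" "clamp t \<le> 1/2" using t by (auto simp: clamp_def)
  have "P0 0 \<le> P0 (clamp t)" "P0 (clamp t) \<le> P0 (1/2)" using c by (intro P0_mono; simp)+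
  then show ?thesis by (simp add: psi0_def P0_vals)
qed

definition gsum :: "(real \<Rightarrow> real) \<Rightarrow> nat set \<Rightarrow> real \<Rightarrow> real \<Rightarrow> real" where
  "gsum \<phi> B L x = (\<Sum>j\<in>B. \<phi> (x / L - real j))"

lemma gsum_deriv:
  assumes "\<And>t. (\<phi> has_real_derivative \<phi>' t) (at t)" and Lnz: "L \<noteq> 0"
  shows "((\<lambda>x. c * gsum \<phi> B L x) has_real_derivative (c / L) * gsum \<phi>' B L x) (at x)"
proof -
  have "((\<lambda>x. \<phi> (x / L - real j)) has_real_derivative \<phi>' (x / L - real j) * (1 / L)) (at x)" for j
    by (rule DERIV_chain2[OF assms(1)]) (rule derivative_eq_intros refl | simp add: Lnz)+
  then have "((\<lambda>x. gsum \<phi> B L x) has_real_derivative (\<Sum>j\<in>B. \<phi>' (x / L - real j) * (1 / L))) (at x)"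
    unfolding gsum_def by (rule DERIV_sum)
  then have "((\<lambda>x. c * gsum \<phi> B L x) has_real_derivative c * (\<Sum>j\<in>B. \<phi>' (x / L - real j) * (1 / L))) (at x)"
    by (rule DERIV_cmult)
  then show ?thesis by (simp add: gsum_def sum_distrib_right sum_distrib_left)
qed

lemma gsum_cont:
  assumes "continuous_on UNIV \<phi>" "L \<noteq> 0"
  shows "continuous_on UNIV (\<lambda>x. c * gsum \<phi> B L x)"
  unfolding gsum_def
  by (intro continuous_on_mult continuous_on_const continuous_on_sum continuous_on_compose2[OF assms(1)]
        continuous_on_diff continuous_on_divide continuous_on_id) (use assms in auto)

lemma int_sep:
  fixes s :: real and i j :: nat
  assumes "0 < s - i" "s - i < 1" "i \<noteq> j"
  shows "s - j \<le> 0 \<or> 1 \<le> s - j"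
proof (cases "j < i")
  case True then have "real j + 1 \<le> real i" by linarith
  then show ?thesis using assms by linarith
next
  case False then have "real i + 1 \<le> real j" using assms(3) by linarith
  then show ?thesis using assms by linarith
qed

lemma gsum_bound:
  assumes fin: "finite B" and M: "\<And>t. \<bar>\<phi> t\<bar> \<le> M" and V: "\<And>t. t \<le> 0 \<or> 1 \<le> t \<Longrightarrow> \<phi> t = 0"
  shows "\<bar>gsum \<phi> B L x\<bar> \<le> M"
proof (cases "\<exists>i\<in>B. 0 < x / L - i \<and> x / L - i < 1")
  case True
  then obtain i where i: "i \<in> B" "0 < x / L - i" "x / L - i < 1" by blast
  have "gsum \<phi> B L x = \<phi> (x / L - i) + (\<Sum>j\<in>B - {i}. \<phi> (x / L - real j))"
    unfolding gsum_def using sum.remove[OF fin i(1)] by simp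
  also have "(\<Sum>j\<in>B - {i}. \<phi> (x / L - real j)) = 0"
    by (rule sum.neutral) (use V int_sep[OF i(2,3)] in auto)
  finally show ?thesis using M by simp
next
  case False
  then have "gsum \<phi> B L x = 0" unfolding gsum_def by (intro sum.neutral ballI V) force
  then show ?thesis using M[of 0] by simp
qed

definition Fmap :: "(real \<Rightarrow> real) \<Rightarrow> (real \<Rightarrow> real) \<Rightarrow> real^2 \<Rightarrow> real^2" where
  "Fmap g g1 p = vector [p$1 - p$2 * g1 (p$1), p$2 + g (p$1)]"

lemma vec2_cont:
  assumes "continuous_on S f" "continuous_on S g"
  shows "continuous_on S (\<lambda>t. vector [f t, g t] :: real^2)"
proof -
  have e: "\<And>a b. (vector [a, b] :: real^2) = a *\<^sub>R vector [1,0] + b *\<^sub>R vector [0,1]"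
    by (simp add: vec_eq_iff forall_2)
  show ?thesis by (subst e) (intro continuous_on_add continuous_on_scaleR continuous_on_const assms)
qed

lemma psi0_cont: "continuous_on UNIV psi0"
  using dpsi0 by (auto intro!: continuous_at_imp_continuous_on DERIV_isCont)

lemma gsum_split:
  assumes fin: "finite C" and x: "x / L \<le> real k + 1"
  shows "gsum psi0 C L x = (\<Sum>j\<in>C \<inter> {..k}. psi0 (x / L - real j))"
proof -
  have "gsum psi0 C L x = (\<Sum>j\<in>C \<inter> {..k}. psi0 (x / L - real j)) + (\<Sum>j\<in>C - {..k}. psi0 (x / L - real j))"
    unfolding gsum_def by (rule sum.Int_Diff[OF fin])
  moreover have "(\<Sum>j\<in>C - {..k}. psi0 (x / L - real j)) = 0"
  proof (rule sum.neutral, intro ballI)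
    fix j assume "j \<in> C - {..k}"
    then have "real k + 1 \<le> real j" by auto
    then show "psi0 (x / L - real j) = 0" using x by (intro psi0_neg) linarith
  qed
  ultimately show ?thesis by simp
qed

lemma path_pair:
  fixes B B' :: "nat set" and H L R :: real and k :: nat
  assumes H: "H > 0" and L: "L > 0" and fin: "finite B" "finite B'"
    and kB: "k \<in> B" "k \<notin> B'" and below: "\<And>j. j < k \<Longrightarrow> (j \<in> B \<longleftrightarrow> j \<in> B')"
    and kR: "(real k + 1) * L \<le> R"
  shows "path_in_from_to
     (Fmap (\<lambda>x. 2*H * gsum psi0 B L x) (\<lambda>x. (2*H/L) * gsum psi1 B L x) ` {x. 0 \<le> x$1 \<and> x$1 \<le> R \<and> x$2 = 0} \<inter>
      Fmap (\<lambda>x. 2*H * gsum psi0 B' L x) (\<lambda>x. (2*H/L) * gsum psi1 B' L x) ` {x. 0 \<le> x$1 \<and> x$1 \<le> R \<and> 0 \<le> x$2 \<and> x$2 \<le> H})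
     0 (Fmap (\<lambda>x. 2*H * gsum psi0 B' L x) (\<lambda>x. (2*H/L) * gsum psi1 B' L x) ` {x. 0 \<le> x$1 \<and> x$1 \<le> R \<and> x$2 = H})"
proof -
  define g where "g = (\<lambda>x. 2*H * gsum psi0 B L x)"
  define g1 where "g1 = (\<lambda>x. (2*H/L) * gsum psi1 B L x)"
  define g' where "g' = (\<lambda>x. 2*H * gsum psi0 B' L x)"
  define g1' where "g1' = (\<lambda>x. (2*H/L) * gsum psi1 B' L x)"
  define xs where "xs = (real k + 1/2) * L"
  define y where "y = (\<lambda>x. 2*H * psi0 (x / L - real k))"
  have xs0: "0 \<le> xs" and xsR: "xs \<le> R" using L kR by (auto simp: xs_def algebra_simps)
  have Bk: "B \<inter> {..k} = insert k (B' \<inter> {..<k})" using kB below by (auto simp: le_less)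
  have Bk': "B' \<inter> {..k} = B' \<inter> {..<k}" using kB by (auto simp: le_less)
  have diff: "g x = g' x + y x" if "0 \<le> x" "x \<le> xs" for x
  proof -
    have x: "x / L \<le> real k + 1" using that L by (simp add: xs_def divide_le_eq algebra_simps)
    have "gsum psi0 B L x = psi0 (x / L - real k) + gsum psi0 B' L x"
      unfolding gsum_split[OF fin(1) x] gsum_split[OF fin(2) x] Bk Bk' by (simp add: sum.insert)
    then show ?thesis unfolding g_def g'_def y_def by (simp add: algebra_simps)
  qed
  have yg1: "y x * g1' x = 0" if "0 \<le> x" "x \<le> xs" for x
  proof (cases "x / L \<le> real k")
    case True then have "y x = 0" unfolding y_def by (simp add: psi0_neg)
    then show ?thesis by simp
  next
    case False
    have x: "x / L \<le> real k + 1/2" using that L by (simp add: xs_def divide_le_eq algebra_simps)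
    have "gsum psi1 B' L x = 0" unfolding gsum_def
    proof (rule sum.neutral, intro ballI)
      fix j assume j: "j \<in> B'"
      then have "j \<noteq> k" using kB by auto
      then have "x / L - real j \<le> 0 \<or> 1 \<le> x / L - real j"
      proof (cases "j < k")
        case True then have "real j + 1 \<le> real k" by linarith
        then show ?thesis using False by linarith
      next
        case f2: False then have "real k + 1 \<le> real j" using \<open>j \<noteq> k\<close> by linarith
        then show ?thesis using x by linarith
      qed
      then show "psi1 (x / L - real j) = 0" using psi_vanish by blast
    qed
    then show ?thesis unfolding g1'_def by simp
  qed
  have yr: "0 \<le> y x \<and> y x \<le> H" if "x \<le> xs" for x
  proof -
    have "x / L - real k \<le> 1/2" using that L by (simp add: xs_def divide_le_eq algebra_simps)
    then show ?thesis using psi0_range[of "x / L - real k"] H unfolding y_def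
      by (auto simp: mult_nonneg_nonneg)
  qed
  have img: "vector [x, g x] = Fmap g' g1' (vector [x, y x])" if "0 \<le> x" "x \<le> xs" for x
  proof -
    have "y x * g1' x = 0" by (rule yg1[OF that])
    then have "x - y x * g1' x = x" by simp
    then show ?thesis using diff[OF that] by (auto simp: Fmap_def vec_eq_iff forall_2)
  qed
  define \<gamma> where "\<gamma> = (\<lambda>t. vector [xs * t, g (xs * t)] :: real^2)"
  have "path_in_from_to (Fmap g g1 ` {x. 0 \<le> x$1 \<and> x$1 \<le> R \<and> x$2 = 0} \<inter>
         Fmap g' g1' ` {x. 0 \<le> x$1 \<and> x$1 \<le> R \<and> 0 \<le> x$2 \<and> x$2 \<le> H}) 0
         (Fmap g' g1' ` {x. 0 \<le> x$1 \<and> x$1 \<le> R \<and> x$2 = H})"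
    unfolding path_in_from_to_def
  proof (intro exI[of _ \<gamma>] conjI)
    have gc: "continuous_on UNIV g" unfolding g_def by (rule gsum_cont[OF psi0_cont]) (use L in auto)
    show "path \<gamma>" unfolding path_def \<gamma>_def
      by (intro vec2_cont continuous_on_mult continuous_on_const continuous_on_id
           continuous_on_compose2[OF gc]) auto
    show "path_image \<gamma> \<subseteq> Fmap g g1 ` {x. 0 \<le> x$1 \<and> x$1 \<le> R \<and> x$2 = 0} \<inter>
         Fmap g' g1' ` {x. 0 \<le> x$1 \<and> x$1 \<le> R \<and> 0 \<le> x$2 \<and> x$2 \<le> H}"
    proof
      fix z assume "z \<in> path_image \<gamma>"
      then obtain t where t: "0 \<le> t" "t \<le> 1" "z = \<gamma> t" by (auto simp: path_image_def)
      define x where "x = xs * t"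
      have x0: "0 \<le> x" and xx: "x \<le> xs" using t xs0 by (auto simp: x_def mult_le_cancel_left1 mult_right_le_one_le)
      have z: "z = vector [x, g x]" using t by (simp add: \<gamma>_def x_def)
      have "z = Fmap g g1 (vector [x, 0])" unfolding z by (simp add: Fmap_def)
      moreover have "(vector [x, 0] :: real^2) \<in> {x. 0 \<le> x$1 \<and> x$1 \<le> R \<and> x$2 = (0::real)}" using x0 xx xsR by simp
      moreover have "z = Fmap g' g1' (vector [x, y x])" unfolding z by (rule img[OF x0 xx])
      moreover have "(vector [x, y x] :: real^2) \<in> {x. 0 \<le> x$1 \<and> x$1 \<le> R \<and> 0 \<le> x$2 \<and> x$2 \<le> H}"
        using x0 xx xsR yr[OF xx] by simp
      ultimately show "z \<in> Fmap g g1 ` {x. 0 \<le> x$1 \<and> x$1 \<le> R \<and> x$2 = 0} \<inter>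
         Fmap g' g1' ` {x. 0 \<le> x$1 \<and> x$1 \<le> R \<and> 0 \<le> x$2 \<and> x$2 \<le> H}" by blast
    qed
    have g0: "g 0 = 0" unfolding g_def gsum_def by (simp add: psi0_neg)
    show "pathstart \<gamma> = 0" by (simp add: pathstart_def \<gamma>_def g0 vec_eq_iff forall_2)
    have yxs: "y xs = H" using L by (simp add: y_def xs_def psi0_half field_simps)
    have "pathfinish \<gamma> = Fmap g' g1' (vector [xs, H])"
      using img[OF xs0 order_refl] yxs by (simp add: pathfinish_def \<gamma>_def)
    then show "pathfinish \<gamma> \<in> Fmap g' g1' ` {x. 0 \<le> x$1 \<and> x$1 \<le> R \<and> x$2 = H}"
      using xs0 xsR by auto
  qed
  then show ?thesis unfolding g_def g1_def g'_def g1'_def .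
qed

lemma abs_cgsum: "0 \<le> c \<Longrightarrow> \<bar>gsum \<phi> B L x\<bar> \<le> M \<Longrightarrow> \<bar>c * gsum \<phi> B L x\<bar> \<le> c * M"
  by (simp add: abs_mult mult_left_mono)

lemma member_smap:
  assumes H: "0 < H" and L: "0 < L" and fin: "finite B"
    and small: "3 * H * (2*H/L/L * 5040) + 2 * (2*H/L * 1120) \<le> 1/2"
  shows "smap (\<lambda>x. 2*H * gsum psi0 B L x) (\<lambda>x. (2*H/L) * gsum psi1 B L x)
     (\<lambda>x. (2*H/L/L) * gsum psi2 B L x) (\<lambda>x. (2*H/L/L/L) * gsum psi3 B L x)
     H (2*H/L * 1120) (2*H/L/L * 5040) (2*H/L/L/L * 18480)"
proof
  have Lnz: "L \<noteq> 0" using L by simp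
  show "((\<lambda>x. 2*H * gsum psi0 B L x) has_real_derivative (2*H/L) * gsum psi1 B L t) (at t)" for t
    using gsum_deriv[OF dpsi0 Lnz, of "2*H" B t] by simp
  show "((\<lambda>x. (2*H/L) * gsum psi1 B L x) has_real_derivative (2*H/L/L) * gsum psi2 B L t) (at t)" for t
    using gsum_deriv[OF dpsi1 Lnz, of "2*H/L" B t] by simp
  show "((\<lambda>x. (2*H/L/L) * gsum psi2 B L x) has_real_derivative (2*H/L/L/L) * gsum psi3 B L t) (at t)" for t
    using gsum_deriv[OF dpsi2 Lnz, of "2*H/L/L" B t] by simp
  show "continuous_on UNIV (\<lambda>x. (2*H/L/L/L) * gsum psi3 B L x)"
    by (rule gsum_cont[OF psi3_cont Lnz])
  show "0 < H" by (rule H)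
  have c: "0 \<le> 2*H/L" "0 \<le> 2*H/L/L" "0 \<le> 2*H/L/L/L" using H L by auto
  show "\<bar>(2*H/L) * gsum psi1 B L t\<bar> \<le> 2*H/L * 1120" for t
    by (rule abs_cgsum[OF c(1) gsum_bound[OF fin]]) (use psi_bounds psi_vanish in auto)
  show "\<bar>(2*H/L/L) * gsum psi2 B L t\<bar> \<le> 2*H/L/L * 5040" for t
    by (rule abs_cgsum[OF c(2) gsum_bound[OF fin]]) (use psi_bounds psi_vanish in auto)
  show "\<bar>(2*H/L/L/L) * gsum psi3 B L t\<bar> \<le> 2*H/L/L/L * 18480" for t
    by (rule abs_cgsum[OF c(3) gsum_bound[OF fin]]) (use psi_bounds psi_vanish in auto)
  show "3 * H * (2*H/L/L * 5040) + 2 * (2*H/L * 1120) \<le> 1/2" by (rule small)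
qed

lemma bit_high: "(\<alpha>::nat) < 2^N \<Longrightarrow> N \<le> k \<Longrightarrow> \<not> bit \<alpha> k"
proof -
  assume a: "\<alpha> < 2^N" "N \<le> k"
  have "(2::nat)^N \<le> 2^k" using a(2) by (simp add: power_increasing)
  then have "\<alpha> < 2^k" using a(1) by linarith
  then have "\<alpha> div 2^k = 0" by (rule div_less)
  then show ?thesis by (simp add: bit_iff_odd)
qed

lemma bits_differ:
  assumes "(\<alpha>::nat) \<noteq> \<alpha>'" "\<alpha> < 2^N" "\<alpha>' < 2^N"
  shows "\<exists>k<N. bit \<alpha> k \<noteq> bit \<alpha>' k \<and> (\<forall>j<k. bit \<alpha> j = bit \<alpha>' j)"
proof -
  have ex: "\<exists>j. bit \<alpha> j \<noteq> bit \<alpha>' j"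
  proof (rule ccontr)
    assume "\<not> ?thesis"
    then have "\<alpha> = \<alpha>'" by (intro bit_eqI) auto
    then show False using assms(1) by simp
  qed
  define k where "k = (LEAST j. bit \<alpha> j \<noteq> bit \<alpha>' j)"
  have k: "bit \<alpha> k \<noteq> bit \<alpha>' k" unfolding k_def by (rule LeastI_ex[OF ex])
  have below: "\<forall>j<k. bit \<alpha> j = bit \<alpha>' j" unfolding k_def using not_less_Least by blast
  have "k < N"
  proof (rule ccontr)
    assume "\<not> k < N"
    then show False using k bit_high[OF assms(2)] bit_high[OF assms(3)] by simp
  qed
  then show ?thesis using k below by blast
qed

definition "C2c = (4 * 18480 + 6 * 5040 :: real)"
definition "C3c = (4 * 5040 + 16 * 1120^2 :: real)"

lemma family_exists:
  fixes H L R :: real and N :: nat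
  assumes H1: "1 \<le> H" and L1: "1 \<le> L" and NL: "real N * L \<le> R" and e: "H / L \<le> 1/70000"
  shows "\<exists>(A :: nat set) (F :: nat \<Rightarrow> real^2 \<Rightarrow> real^2).
       (\<forall>\<alpha>\<in>A. C2_diffeo_onto_image (strip H) (F \<alpha>) \<and> F \<alpha> 0 = 0) \<and>
       finite A \<and> card A = 2^N \<and>
       (\<forall>\<alpha>\<in>A. \<forall>\<alpha>'\<in>A. \<alpha> \<noteq> \<alpha>' \<longrightarrow>
          path_in_from_to
            (F \<alpha> ` {x. 0 \<le> x$1 \<and> x$1 \<le> R \<and> x$2 = 0} \<inter>
             F \<alpha>' ` {x. 0 \<le> x$1 \<and> x$1 \<le> R \<and> 0 \<le> x$2 \<and> x$2 \<le> H})
            0 (F \<alpha>' ` {x. 0 \<le> x$1 \<and> x$1 \<le> R \<and> x$2 = H})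
          \<or>
          path_in_from_to
            (F \<alpha>' ` {x. 0 \<le> x$1 \<and> x$1 \<le> R \<and> x$2 = 0} \<inter>
             F \<alpha> ` {x. 0 \<le> x$1 \<and> x$1 \<le> R \<and> 0 \<le> x$2 \<and> x$2 \<le> H})
            0 (F \<alpha> ` {x. 0 \<le> x$1 \<and> x$1 \<le> R \<and> x$2 = H})) \<and>
       (\<forall>\<alpha>\<in>A. \<exists>Df D2f. C2_with (strip H) (F \<alpha>) Df D2f \<and>
          (\<forall>x\<in>strip H.
             norm (D2f x) \<le> C2c * (H/L)^2 \<and>
             (\<exists>J :: (real^2) \<Rightarrow>\<^sub>L (real^2). orthogonal_transformation (blinfun_apply J) \<and>
                 norm (Df x - J) \<le> C3c * (H/L)^2) \<and>
             (\<forall>y\<in>strip H.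
                 dist x y / 2 \<le> dist (F \<alpha> x) (F \<alpha> y) \<and>
                 dist (F \<alpha> x) (F \<alpha> y) \<le> 2 * dist x y)))"
proof -
  have H: "0 < H" and L: "0 < L" using H1 L1 by auto
  define e where "e = H / L"
  have e0: "0 \<le> e" and e1: "e \<le> 1/70000" using H L e by (auto simp: e_def)
  define B where "B = (\<lambda>\<alpha>::nat. {j. j < N \<and> bit \<alpha> j})"
  have finB: "finite (B \<alpha>)" for \<alpha> unfolding B_def by simp
  define gg where "gg = (\<lambda>B x. 2*H * gsum psi0 B L x)"
  define gg1 where "gg1 = (\<lambda>B x. (2*H/L) * gsum psi1 B L x)"
  define gg2 where "gg2 = (\<lambda>B x. (2*H/L/L) * gsum psi2 B L x)"
  define gg3 where "gg3 = (\<lambda>B x. (2*H/L/L/L) * gsum psi3 B L x)"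
  define \<sigma> where "\<sigma> = 2*H/L * 1120"
  define \<kappa> where "\<kappa> = 2*H/L/L * 5040"
  define \<tau> where "\<tau> = 2*H/L/L/L * 18480"
  have sm_ineq: "3 * H * (2*H/L/L * 5040) + 2 * (2*H/L * 1120) \<le> 1/2"
  proof -
    have "3 * H * (2*H/L/L * 5040) + 2 * (2*H/L * 1120) = 30240 * e^2 + 4480 * e"
      by (simp add: e_def power2_eq_square field_simps)
    also have "\<dots> \<le> 30240 * e + 4480 * e"
      using e0 e1 by (intro add_mono mult_left_mono) (auto simp: power2_eq_square mult_le_cancel_left1 intro: mult_left_le_one_le)
    also have "\<dots> \<le> 1/2" using e1 by simp
    finally show ?thesis .
  qed
  have SM: "smap (gg C) (gg1 C) (gg2 C) (gg3 C) H \<sigma> \<kappa> \<tau>" if "finite C" for C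
    unfolding gg_def gg1_def gg2_def gg3_def \<sigma>_def \<kappa>_def \<tau>_def by (rule member_smap[OF H L that sm_ineq])
  define F where "F = (\<lambda>\<alpha>. smap.F (gg (B \<alpha>)) (gg1 (B \<alpha>)))"
  have FF: "F \<alpha> = Fmap (gg (B \<alpha>)) (gg1 (B \<alpha>))" for \<alpha>
    unfolding F_def by (rule ext) (simp add: smap.F_def[OF SM[OF finB]] Fmap_def)
  define A where "A = {..<(2::nat)^N}"
  show ?thesis
  proof (intro exI[of _ A] exI[of _ F] conjI ballI impI)
    fix \<alpha> assume "\<alpha> \<in> A"
    interpret S: smap "gg (B \<alpha>)" "gg1 (B \<alpha>)" "gg2 (B \<alpha>)" "gg3 (B \<alpha>)" H \<sigma> \<kappa> \<tau> by (rule SM[OF finB])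
    show "C2_diffeo_onto_image (strip H) (F \<alpha>)" unfolding F_def by (rule S.C2_main(1))
    show "F \<alpha> 0 = 0" unfolding FF Fmap_def gg_def gsum_def by (simp add: psi0_neg vec_eq_iff forall_2)
  next
    show "finite A" "card A = 2^N" by (simp_all add: A_def)
  next
    fix \<alpha> \<alpha>' assume a: "\<alpha> \<in> A" "\<alpha>' \<in> A" "\<alpha> \<noteq> \<alpha>'"
    obtain k where k: "k < N" "bit \<alpha> k \<noteq> bit \<alpha>' k" "\<forall>j<k. bit \<alpha> j = bit \<alpha>' j"
      using bits_differ[OF a(3)] a(1,2) by (auto simp: A_def)
    have kR: "(real k + 1) * L \<le> R"
    proof -
      have "real k + 1 \<le> real N" using k(1) by linarith
      then have "(real k + 1) * L \<le> real N * L" using L by (intro mult_right_mono) auto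
      then show ?thesis using NL by linarith
    qed
    show "path_in_from_to
            (F \<alpha> ` {x. 0 \<le> x$1 \<and> x$1 \<le> R \<and> x$2 = 0} \<inter>
             F \<alpha>' ` {x. 0 \<le> x$1 \<and> x$1 \<le> R \<and> 0 \<le> x$2 \<and> x$2 \<le> H})
            0 (F \<alpha>' ` {x. 0 \<le> x$1 \<and> x$1 \<le> R \<and> x$2 = H})
          \<or>
          path_in_from_to
            (F \<alpha>' ` {x. 0 \<le> x$1 \<and> x$1 \<le> R \<and> x$2 = 0} \<inter>
             F \<alpha> ` {x. 0 \<le> x$1 \<and> x$1 \<le> R \<and> 0 \<le> x$2 \<and> x$2 \<le> H})
            0 (F \<alpha> ` {x. 0 \<le> x$1 \<and> x$1 \<le> R \<and> x$2 = H})"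
    proof (cases "bit \<alpha> k")
      case True
      have "k \<in> B \<alpha>" "k \<notin> B \<alpha>'" using True k by (auto simp: B_def)
      moreover have "\<And>j. j < k \<Longrightarrow> (j \<in> B \<alpha> \<longleftrightarrow> j \<in> B \<alpha>')" using k by (auto simp: B_def)
      ultimately have "path_in_from_to
            (F \<alpha> ` {x. 0 \<le> x$1 \<and> x$1 \<le> R \<and> x$2 = 0} \<inter>
             F \<alpha>' ` {x. 0 \<le> x$1 \<and> x$1 \<le> R \<and> 0 \<le> x$2 \<and> x$2 \<le> H})
            0 (F \<alpha>' ` {x. 0 \<le> x$1 \<and> x$1 \<le> R \<and> x$2 = H})"
        unfolding FF gg_def gg1_def by (rule path_pair[OF H L finB finB _ _ _ kR])
      then show ?thesis by blast
    next
      case False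
      have "k \<in> B \<alpha>'" "k \<notin> B \<alpha>" using False k by (auto simp: B_def)
      moreover have "\<And>j. j < k \<Longrightarrow> (j \<in> B \<alpha>' \<longleftrightarrow> j \<in> B \<alpha>)" using k by (auto simp: B_def)
      ultimately have "path_in_from_to
            (F \<alpha>' ` {x. 0 \<le> x$1 \<and> x$1 \<le> R \<and> x$2 = 0} \<inter>
             F \<alpha> ` {x. 0 \<le> x$1 \<and> x$1 \<le> R \<and> 0 \<le> x$2 \<and> x$2 \<le> H})
            0 (F \<alpha> ` {x. 0 \<le> x$1 \<and> x$1 \<le> R \<and> x$2 = H})"
        unfolding FF gg_def gg1_def by (rule path_pair[OF H L finB finB _ _ _ kR])
      then show ?thesis by blast
    qed
  next
    fix \<alpha> assume "\<alpha> \<in> A"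
    interpret S: smap "gg (B \<alpha>)" "gg1 (B \<alpha>)" "gg2 (B \<alpha>)" "gg3 (B \<alpha>)" H \<sigma> \<kappa> \<tau> by (rule SM[OF finB])
    have b2: "2*H*\<tau> + 3*\<kappa> \<le> C2c * (H/L)^2"
    proof -
      have "2*H*\<tau> = 4*18480 * (H/L)^2 * (1/L)" by (simp add: \<tau>_def power2_eq_square field_simps)
      also have "\<dots> \<le> 4*18480 * (H/L)^2 * 1" using L1 by (intro mult_left_mono) auto
      finally have 1: "2*H*\<tau> \<le> 4*18480 * (H/L)^2" by simp
      have "3*\<kappa> = 6*5040 * (H/L)^2 * (1/H)" using H by (simp add: \<kappa>_def power2_eq_square field_simps)
      also have "\<dots> \<le> 6*5040 * (H/L)^2 * 1" using H1 by (intro mult_left_mono) auto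
      finally have 2: "3*\<kappa> \<le> 6*5040 * (H/L)^2" by simp
      show ?thesis using 1 2 by (simp add: C2c_def algebra_simps)
    qed
    have b3: "2*H*\<kappa> + 4*\<sigma>\<^sup>2 \<le> C3c * (H/L)^2"
      by (simp add: C3c_def \<kappa>_def \<sigma>_def power2_eq_square field_simps)
    show "\<exists>Df D2f. C2_with (strip H) (F \<alpha>) Df D2f \<and>
          (\<forall>x\<in>strip H.
             norm (D2f x) \<le> C2c * (H/L)^2 \<and>
             (\<exists>J :: (real^2) \<Rightarrow>\<^sub>L (real^2). orthogonal_transformation (blinfun_apply J) \<and>
                 norm (Df x - J) \<le> C3c * (H/L)^2) \<and>
             (\<forall>y\<in>strip H.
                 dist x y / 2 \<le> dist (F \<alpha> x) (F \<alpha> y) \<and>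
                 dist (F \<alpha> x) (F \<alpha> y) \<le> 2 * dist x y))"
    proof (intro exI[of _ S.DF] exI[of _ S.D2F] conjI ballI)
      show "C2_with (strip H) (F \<alpha>) S.DF S.D2F" unfolding F_def by (rule S.C2_main(2))
      fix x assume x: "x \<in> strip H"
      show "norm (S.D2F x) \<le> C2c * (H/L)^2" using S.D2F_bound[OF x] b2 by linarith
      show "\<exists>J :: (real^2) \<Rightarrow>\<^sub>L (real^2). orthogonal_transformation (blinfun_apply J) \<and>
                 norm (S.DF x - J) \<le> C3c * (H/L)^2"
        using rot_orth S.DF_close[OF x] b3 by (intro exI[of _ "rot (gg1 (B \<alpha>) (x$1))"] conjI) auto
      fix y assume y: "y \<in> strip H"
      have bx: "\<bar>x$2\<bar> \<le> 3*H" "\<bar>y$2\<bar> \<le> 3*H" using S.strip_bound[OF x] S.strip_bound[OF y] H by auto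
      show "dist x y / 2 \<le> dist (F \<alpha> x) (F \<alpha> y)" unfolding F_def dist_norm by (rule S.bilip(1)[OF bx])
      show "dist (F \<alpha> x) (F \<alpha> y) \<le> 2 * dist x y" unfolding F_def dist_norm by (rule S.bilip(2)[OF bx])
    qed
  qed
qed

theorem lemma3p1:
  fixes a b :: real
  assumes "0 < a" "a < b" "b < 1"
  shows "\<exists>c1 c2 c3 c4 R0 :: real. c1 > 0 \<and> c2 > 0 \<and> c3 > 0 \<and> c4 > 0 \<and> R0 > 0 \<and>
    (\<forall>R \<ge> R0. \<exists>(A :: nat set) (F :: nat \<Rightarrow> real^2 \<Rightarrow> real^2).
       (\<forall>\<alpha>\<in>A. C2_diffeo_onto_image (strip (R powr a)) (F \<alpha>) \<and> F \<alpha> 0 = 0) \<and>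
       finite A \<and> real (card A) \<ge> exp (c1 * R powr (1 - b)) \<and>
       (\<forall>\<alpha>\<in>A. \<forall>\<alpha>'\<in>A. \<alpha> \<noteq> \<alpha>' \<longrightarrow>
          path_in_from_to
            (F \<alpha> ` {x. 0 \<le> x$1 \<and> x$1 \<le> R \<and> x$2 = 0} \<inter>
             F \<alpha>' ` {x. 0 \<le> x$1 \<and> x$1 \<le> R \<and> 0 \<le> x$2 \<and> x$2 \<le> R powr a})
            0 (F \<alpha>' ` {x. 0 \<le> x$1 \<and> x$1 \<le> R \<and> x$2 = R powr a})
          \<or>
          path_in_from_to
            (F \<alpha>' ` {x. 0 \<le> x$1 \<and> x$1 \<le> R \<and> x$2 = 0} \<inter>
             F \<alpha> ` {x. 0 \<le> x$1 \<and> x$1 \<le> R \<and> 0 \<le> x$2 \<and> x$2 \<le> R powr a})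
            0 (F \<alpha> ` {x. 0 \<le> x$1 \<and> x$1 \<le> R \<and> x$2 = R powr a})) \<and>
       (\<forall>\<alpha>\<in>A. \<exists>Df D2f. C2_with (strip (R powr a)) (F \<alpha>) Df D2f \<and>
          (\<forall>x\<in>strip (R powr a).
             norm (D2f x) \<le> c2 * R powr (2 * (a - b)) \<and>
             (\<exists>J :: (real^2) \<Rightarrow>\<^sub>L (real^2). orthogonal_transformation (blinfun_apply J) \<and>
                 norm (Df x - J) \<le> c3 * R powr (2 * (a - b))) \<and>
             (\<forall>y\<in>strip (R powr a).
                 dist x y / c4 \<le> dist (F \<alpha> x) (F \<alpha> y) \<and>
                 dist (F \<alpha> x) (F \<alpha> y) \<le> c4 * dist x y))))"
proof -
  define \<epsilon> :: real where "\<epsilon> = 1/70000"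
  define R0 where "R0 = max (max 1 (\<epsilon> powr (1/(a-b)))) (2 powr (1/(1-b)))"
  have ab: "a - b < 0" "a - b \<le> 0" and b1: "0 < 1 - b" "0 \<le> 1 - b" and a0: "0 \<le> a" and b0: "0 \<le> b"
    using assms by auto
  have C2p: "C2c > 0" and C3p: "C3c > 0" by (simp_all add: C2c_def C3c_def)
  show ?thesis
  proof (rule exI[of _ "1/4::real"], rule exI[of _ C2c], rule exI[of _ C3c], rule exI[of _ "2::real"], rule exI[of _ R0], intro conjI allI impI)
    show "(0::real) < 1/4" "0 < C2c" "0 < C3c" "(0::real) < 2" using C2p C3p by auto
    show "0 < R0" unfolding R0_def by simp
    fix R :: real assume RR0: "R0 \<le> R"
    have R1: "1 \<le> R" using RR0 unfolding R0_def by simp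
    have Rpos: "0 < R" using R1 by simp
    define H where "H = R powr a"
    define L where "L = R powr b"
    define M where "M = R powr (1 - b)"
    have H1: "1 \<le> H" unfolding H_def by (rule ge_one_powr_ge_zero[OF R1 a0])
    have L1: "1 \<le> L" unfolding L_def by (rule ge_one_powr_ge_zero[OF R1 b0])
    have HL: "H / L = R powr (a - b)" unfolding H_def L_def by (simp add: powr_diff)
    have eps: "R powr (a - b) \<le> \<epsilon>"
    proof -
      have p: "0 < \<epsilon> powr (1/(a-b))" by (simp add: \<epsilon>_def)
      have "\<epsilon> powr (1/(a-b)) \<le> R" using RR0 unfolding R0_def by simp
      then have "R powr (a - b) \<le> (\<epsilon> powr (1/(a-b))) powr (a - b)" by (rule powr_mono2'[OF ab(2) p])
      also have "\<dots> = \<epsilon>" using ab by (simp add: powr_powr \<epsilon>_def)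
      finally show ?thesis .
    qed
    have M2: "2 \<le> M"
    proof -
      have "2 powr (1/(1-b)) \<le> R" using RR0 unfolding R0_def by simp
      then have "(2 powr (1/(1-b))) powr (1 - b) \<le> R powr (1 - b)" using powr_mono2[OF b1(2), of "2 powr (1/(1-b))" R] by simp
      also have "(2 powr (1/(1-b))) powr (1 - b) = 2" using b1 by (simp add: powr_powr)
      finally show ?thesis unfolding M_def by simp
    qed
    define N where "N = nat \<lfloor>M\<rfloor>"
    have NM: "real N \<le> M" "M - 1 \<le> real N" using M2 unfolding N_def by linarith+
    have NL: "real N * L \<le> R"
    proof -
      have "real N * L \<le> M * L" using NM L1 by (intro mult_right_mono) auto
      also have "M * L = R" unfolding M_def L_def using Rpos by (simp add: powr_add[symmetric])
      finally show ?thesis .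
    qed
    have e: "H / L \<le> 1/70000" using eps HL by (simp add: \<epsilon>_def)
    have ex: "\<exists>(A :: nat set) (F :: nat \<Rightarrow> real^2 \<Rightarrow> real^2). (\<forall>\<alpha>\<in>A. C2_diffeo_onto_image (strip H) (F \<alpha>) \<and> F \<alpha> 0 = 0) \<and>
       finite A \<and> card A = 2^N \<and>
       (\<forall>\<alpha>\<in>A. \<forall>\<alpha>'\<in>A. \<alpha> \<noteq> \<alpha>' \<longrightarrow>
          path_in_from_to
            (F \<alpha> ` {x. 0 \<le> x$1 \<and> x$1 \<le> R \<and> x$2 = 0} \<inter>
             F \<alpha>' ` {x. 0 \<le> x$1 \<and> x$1 \<le> R \<and> 0 \<le> x$2 \<and> x$2 \<le> H})
            0 (F \<alpha>' ` {x. 0 \<le> x$1 \<and> x$1 \<le> R \<and> x$2 = H})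
          \<or>
          path_in_from_to
            (F \<alpha>' ` {x. 0 \<le> x$1 \<and> x$1 \<le> R \<and> x$2 = 0} \<inter>
             F \<alpha> ` {x. 0 \<le> x$1 \<and> x$1 \<le> R \<and> 0 \<le> x$2 \<and> x$2 \<le> H})
            0 (F \<alpha> ` {x. 0 \<le> x$1 \<and> x$1 \<le> R \<and> x$2 = H})) \<and>
       (\<forall>\<alpha>\<in>A. \<exists>Df D2f. C2_with (strip H) (F \<alpha>) Df D2f \<and>
          (\<forall>x\<in>strip H.
             norm (D2f x) \<le> C2c * (H/L)^2 \<and>
             (\<exists>J :: (real^2) \<Rightarrow>\<^sub>L (real^2). orthogonal_transformation (blinfun_apply J) \<and>
                 norm (Df x - J) \<le> C3c * (H/L)^2) \<and>
             (\<forall>y\<in>strip H.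
                 dist x y / 2 \<le> dist (F \<alpha> x) (F \<alpha> y) \<and>
                 dist (F \<alpha> x) (F \<alpha> y) \<le> 2 * dist x y)))"
      by (rule family_exists[OF H1 L1 NL e])
    have sq: "(H/L)^2 = R powr (2 * (a - b))"
    proof -
      have "R powr (2 * (a - b)) = R powr (a - b) * R powr (a - b)" unfolding mult_2 by (rule powr_add)
      then show ?thesis unfolding HL power2_eq_square by simp
    qed
    have card: "exp (1/4 * R powr (1 - b)) \<le> 2 ^ N"
    proof -
      have "exp (1/4 * M) \<le> exp (real N * (1/2))" using NM M2 by simp
      also have "\<dots> = exp (1/2) ^ N" by (rule exp_of_nat_mult)
      also have "\<dots> \<le> 2 ^ N"
      proof (rule power_mono)
        have "exp (1/2::real) ^ 2 = exp 1" by (simp add: power2_eq_square exp_add[symmetric])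
        also have "\<dots> \<le> 2 ^ 2" using exp_le by simp
        finally show "exp (1/2::real) \<le> 2" by (rule power2_le_imp_le) simp
      qed simp
      finally show ?thesis unfolding M_def .
    qed
    show "\<exists>(A :: nat set) (F :: nat \<Rightarrow> real^2 \<Rightarrow> real^2).
       (\<forall>\<alpha>\<in>A. C2_diffeo_onto_image (strip (R powr a)) (F \<alpha>) \<and> F \<alpha> 0 = 0) \<and>
       finite A \<and> real (card A) \<ge> exp (1/4 * R powr (1 - b)) \<and>
       (\<forall>\<alpha>\<in>A. \<forall>\<alpha>'\<in>A. \<alpha> \<noteq> \<alpha>' \<longrightarrow>
          path_in_from_to
            (F \<alpha> ` {x. 0 \<le> x$1 \<and> x$1 \<le> R \<and> x$2 = 0} \<inter>
             F \<alpha>' ` {x. 0 \<le> x$1 \<and> x$1 \<le> R \<and> 0 \<le> x$2 \<and> x$2 \<le> R powr a})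
            0 (F \<alpha>' ` {x. 0 \<le> x$1 \<and> x$1 \<le> R \<and> x$2 = R powr a})
          \<or>
          path_in_from_to
            (F \<alpha>' ` {x. 0 \<le> x$1 \<and> x$1 \<le> R \<and> x$2 = 0} \<inter>
             F \<alpha> ` {x. 0 \<le> x$1 \<and> x$1 \<le> R \<and> 0 \<le> x$2 \<and> x$2 \<le> R powr a})
            0 (F \<alpha> ` {x. 0 \<le> x$1 \<and> x$1 \<le> R \<and> x$2 = R powr a})) \<and>
       (\<forall>\<alpha>\<in>A. \<exists>Df D2f. C2_with (strip (R powr a)) (F \<alpha>) Df D2f \<and>
          (\<forall>x\<in>strip (R powr a).
             norm (D2f x) \<le> C2c * R powr (2 * (a - b)) \<and>
             (\<exists>J :: (real^2) \<Rightarrow>\<^sub>L (real^2). orthogonal_transformation (blinfun_apply J) \<and>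
                 norm (Df x - J) \<le> C3c * R powr (2 * (a - b))) \<and>
             (\<forall>y\<in>strip (R powr a).
                 dist x y / 2 \<le> dist (F \<alpha> x) (F \<alpha> y) \<and>
                 dist (F \<alpha> x) (F \<alpha> y) \<le> 2 * dist x y)))"
      using ex
      apply (elim exE)
      subgoal premises fam for A F
        unfolding H_def[symmetric] sq[symmetric]
        apply (rule exI[of _ A], rule exI[of _ F], intro conjI)
        subgoal by (rule fam[THEN conjunct1])
        subgoal by (rule fam[THEN conjunct2, THEN conjunct1])
        subgoal using card fam[THEN conjunct2, THEN conjunct2, THEN conjunct1] by simp
        subgoal by (rule fam[THEN conjunct2, THEN conjunct2, THEN conjunct2, THEN conjunct1])
        subgoal by (rule fam[THEN conjunct2, THEN conjunct2, THEN conjunct2, THEN conjunct2])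
        done
      done
  qed
qed

end
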